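(* Work in $\ell_1$ with sequences indexed by $\{0,1,2,\dots\}$ and standard basis $(e_k)$. Let $\xi$ be a random variable with $\Pr\{\xi=k\}=2^{-k}$ for $k=1,2,\dots$, and let $A\colon\Omega\to\mathcal{L}(\ell_1)$ be $Ax:=\xi\,x_\xi\, e_0$ (the operator $\xi|0\rangle\langle\xi|$, whose norm is unbounded in $\omega$). Let $\xi_1,\xi_2,\dots$ be i.i.d. copies of $\xi$ and $A_ix:=\xi_i x_{\xi_i}e_0$. Then for every $x\in\ell_1$, $T>0$, $\varepsilon>0$, $$\lim_{n\to\infty}\Pr\Big\{\sup_{t\in[0,T]}\big\|\big(e^{A_1t/n}\cdots e^{A_nt/n}-e^{t\,\mathbb{E}A}\big)x\big\|_{\ell_1}>\varepsilon\Big\}=0,$$ where $\mathbb{E}Ax=\big(\sum_{k\ge1}k2^{-k}x_k\big)e_0$.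
   Context: $(\Omega,\mathcal{F},\Pr)$ is a probability space; $e^{Bt}=\sum_k t^kB^k/k!$ for bounded $B$. *)

theory Defs
  imports "HOL-Probability.Probability"
begin

definition in_l1 :: "(nat \<Rightarrow> real) \<Rightarrow> bool" where
  "in_l1 x \<longleftrightarrow> summable (\<lambda>k. \<bar>x k\<bar>)"

definition l1norm :: "(nat \<Rightarrow> real) \<Rightarrow> real" where
  "l1norm x = (\<Sum>k. \<bar>x k\<bar>)"

definition opexp :: "((nat \<Rightarrow> real) \<Rightarrow> (nat \<Rightarrow> real)) \<Rightarrow> real \<Rightarrow> (nat \<Rightarrow> real) \<Rightarrow> (nat \<Rightarrow> real)" where
  "opexp B t x = (THE y. in_l1 y \<and>
      (\<lambda>N. l1norm (\<lambda>j. (\<Sum>k<N. (t ^ k / fact k) * (B ^^ k) x j) - y j)) \<longlonglongrightarrow> 0)"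

text \<open>The random operator A_i(omega) x = xi_i x_(xi_i) e_0.\<close>

definition Aop :: "nat \<Rightarrow> (nat \<Rightarrow> real) \<Rightarrow> (nat \<Rightarrow> real)" where
  "Aop m x = (\<lambda>j. if j = 0 then real m * x m else 0)"

definition EAop :: "(nat \<Rightarrow> real) \<Rightarrow> (nat \<Rightarrow> real)" where
  "EAop x = (\<lambda>j. if j = 0 then (\<Sum>k. real (Suc k) / 2 ^ (Suc k) * x (Suc k)) else 0)"

text \<open>The product e^(A_1 t/n) ... e^(A_n t/n), as a map (rightmost factor acts first).\<close>

definition prodexp :: "(nat \<Rightarrow> nat) \<Rightarrow> nat \<Rightarrow> real \<Rightarrow> (nat \<Rightarrow> real) \<Rightarrow> (nat \<Rightarrow> real)" where
  "prodexp m n t = foldr (\<lambda>i f. opexp (Aop (m i)) (t / real n) \<circ> f) [1..<Suc n] id"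

end

theory Submission
  imports Defs
begin


lemma funpow_zero:
  fixes B :: "(nat \<Rightarrow> real) \<Rightarrow> (nat \<Rightarrow> real)"
  assumes "B (B x) = (\<lambda>_. 0)" "B (\<lambda>_. 0) = (\<lambda>_. 0)"
  shows "(B ^^ Suc (Suc k)) x = (\<lambda>_. 0)"
proof (induction k)
  case 0 then show ?case using assms by (simp add: funpow_swap1)
next
  case (Suc k) then show ?case using assms by simp
qed

lemma partial_sum:
  fixes B :: "(nat \<Rightarrow> real) \<Rightarrow> (nat \<Rightarrow> real)" and t :: real
  assumes "B (B x) = (\<lambda>_. 0)" "B (\<lambda>_. 0) = (\<lambda>_. 0)"
  shows "(\<Sum>k<Suc (Suc m). (t ^ k / fact k) * (B ^^ k) x j) = x j + t * B x j"
proof (induction m)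
  case 0 then show ?case by (simp add: numeral_2_eq_2)
next
  case (Suc m) then show ?case using funpow_zero[OF assms, of m] by simp
qed

lemma l1norm_zero: "l1norm (\<lambda>_. 0) = 0" by (simp add: l1norm_def)

lemma in_l1_diff: "in_l1 a \<Longrightarrow> in_l1 b \<Longrightarrow> in_l1 (\<lambda>j. a j - b j)"
  unfolding in_l1_def
  by (rule summable_comparison_test[where g="\<lambda>j. \<bar>a j\<bar> + \<bar>b j\<bar>"]) (auto intro: summable_add)

lemma opexp_nil:
  assumes "B (B x) = (\<lambda>_. 0)" "B (\<lambda>_. 0) = (\<lambda>_. 0)" "in_l1 (\<lambda>j. x j + t * B x j)"
  shows "opexp B t x = (\<lambda>j. x j + t * B x j)"
proof -
  let ?z = "\<lambda>j. x j + t * B x j"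
  let ?P = "\<lambda>y. in_l1 y \<and> (\<lambda>N. l1norm (\<lambda>j. (\<Sum>k<N. (t ^ k / fact k) * (B ^^ k) x j) - y j)) \<longlonglongrightarrow> 0"
  have ev: "\<And>y. eventually (\<lambda>N. l1norm (\<lambda>j. (\<Sum>k<N. (t ^ k / fact k) * (B ^^ k) x j) - y j)
       = l1norm (\<lambda>j. ?z j - y j)) sequentially"
    unfolding eventually_sequentially
  proof (intro allI exI[of _ 2] impI)
    fix y and N :: nat assume "N \<ge> 2"
    then obtain m where Nm: "N = Suc (Suc m)" using le_Suc_ex by (metis add_2_eq_Suc)
    show "l1norm (\<lambda>j. (\<Sum>k<N. (t ^ k / fact k) * (B ^^ k) x j) - y j) = l1norm (\<lambda>j. ?z j - y j)"
      unfolding Nm partial_sum[OF assms(1,2)] by (rule refl)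
  qed
  have "?P ?z"
  proof
    show "in_l1 ?z" by fact
    have "(\<lambda>N. l1norm (\<lambda>j. ?z j - ?z j)) \<longlonglongrightarrow> 0" by (simp add: l1norm_zero)
    then show "(\<lambda>N. l1norm (\<lambda>j. (\<Sum>k<N. (t ^ k / fact k) * (B ^^ k) x j) - ?z j)) \<longlonglongrightarrow> 0"
      using tendsto_cong[OF ev[of ?z]] by simp
  qed
  moreover have "y = ?z" if "?P y" for y
  proof -
    from that have "(\<lambda>N. l1norm (\<lambda>j. ?z j - y j)) \<longlonglongrightarrow> 0"
      using tendsto_cong[OF ev[of y]] by simp
    then have "l1norm (\<lambda>j. ?z j - y j) = 0" using LIMSEQ_const_iff by blast
    moreover have sm: "summable (\<lambda>j. \<bar>?z j - y j\<bar>)"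
      using in_l1_diff[OF assms(3)] that unfolding in_l1_def by blast
    ultimately have "\<forall>j. \<bar>?z j - y j\<bar> = 0"
      unfolding l1norm_def using suminf_eq_zero_iff[OF sm abs_ge_zero] by blast
    then show ?thesis by (simp add: fun_eq_iff)
  qed
  ultimately show ?thesis unfolding opexp_def by (rule the_equality)
qed


lemma Aop_nil: "Aop m (Aop m y) = (\<lambda>_. 0)" "Aop m (\<lambda>_. 0) = (\<lambda>_. 0)"
  by (auto simp: Aop_def)

lemma EAop_nil: "EAop (EAop y) = (\<lambda>_. 0)" "EAop (\<lambda>_. 0) = (\<lambda>_. 0)"
  by (auto simp: EAop_def)

lemma in_l1_e0: "in_l1 x \<Longrightarrow> in_l1 (\<lambda>j. x j + (if j = 0 then a else 0))"
  unfolding in_l1_def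
  by (rule summable_comparison_test[where g="\<lambda>j. \<bar>x j\<bar> + (if j = 0 then \<bar>a\<bar> else 0)"])
     (auto intro!: summable_add summable_If_finite_set[where A="{0}", simplified])

lemma opexp_Aop:
  assumes "in_l1 y"
  shows "opexp (Aop m) s y = (\<lambda>j. y j + (if j = 0 then s * (real m * y m) else 0))"
proof -
  have "opexp (Aop m) s y = (\<lambda>j. y j + s * Aop m y j)"
  proof (rule opexp_nil[OF Aop_nil])
    have "(\<lambda>j. y j + s * Aop m y j) = (\<lambda>j. y j + (if j = 0 then s * (real m * y m) else 0))"
      by (auto simp: Aop_def)
    then show "in_l1 (\<lambda>j. y j + s * Aop m y j)" using in_l1_e0[OF assms] by simp
  qed
  then show ?thesis by (auto simp: Aop_def)
qed

definition cc :: "(nat \<Rightarrow> real) \<Rightarrow> real" where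
  "cc x = (\<Sum>k. real (Suc k) / 2 ^ (Suc k) * x (Suc k))"

lemma opexp_EAop:
  assumes "in_l1 y"
  shows "opexp EAop t y = (\<lambda>j. y j + (if j = 0 then t * cc y else 0))"
proof -
  have "opexp EAop t y = (\<lambda>j. y j + t * EAop y j)"
  proof (rule opexp_nil[OF EAop_nil])
    have "(\<lambda>j. y j + t * EAop y j) = (\<lambda>j. y j + (if j = 0 then t * cc y else 0))"
      by (auto simp: EAop_def cc_def)
    then show "in_l1 (\<lambda>j. y j + t * EAop y j)" using in_l1_e0[OF assms] by simp
  qed
  then show ?thesis by (auto simp: EAop_def cc_def)
qed

lemma foldr_formula:
  fixes s :: real
  assumes "in_l1 x"
  shows "foldr (\<lambda>i f. opexp (Aop (m i)) s \<circ> f) is id x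
     = (\<lambda>j. x j + (if j = 0 then s * sum_list (map (\<lambda>i. real (m i) * x (m i)) is) else 0))"
proof (induction "is")
  case Nil then show ?case by (simp add: fun_eq_iff)
next
  case (Cons i "is")
  let ?y = "foldr (\<lambda>i f. opexp (Aop (m i)) s \<circ> f) is id x"
  have l1: "in_l1 ?y" unfolding Cons.IH by (rule in_l1_e0[OF assms])
  have ym: "real (m i) * ?y (m i) = real (m i) * x (m i)"
    unfolding Cons.IH by (cases "m i = 0") auto
  have "foldr (\<lambda>i f. opexp (Aop (m i)) s \<circ> f) (i # is) id x = opexp (Aop (m i)) s ?y" by (simp only: foldr.simps comp_apply)
  also have "\<dots> = (\<lambda>j. ?y j + (if j = 0 then s * (real (m i) * ?y (m i)) else 0))"
    by (rule opexp_Aop[OF l1])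
  also have "\<dots> = (\<lambda>j. x j + (if j = 0 then s * sum_list (map (\<lambda>i. real (m i) * x (m i)) (i # is)) else 0))"
    unfolding ym unfolding Cons.IH by (rule ext) (simp add: distrib_left add.commute)
  finally show ?case .
qed

lemma prodexp_formula:
  assumes "in_l1 x"
  shows "prodexp m n t x = (\<lambda>j. x j + (if j = 0 then t / real n * (\<Sum>i\<in>{1..n}. real (m i) * x (m i)) else 0))"
proof -
  have hs: "sum_list (map (\<lambda>i. real (m i) * x (m i)) [1..<Suc n]) = (\<Sum>i\<in>{1..n}. real (m i) * x (m i))"
  proof -
    have "set [1..<Suc n] = {1..n}" by auto
    then show ?thesis by (metis sum_set_upt_conv_sum_list_nat)
  qed
  show ?thesis unfolding prodexp_def foldr_formula[OF assms] hs by (rule refl)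
qed

lemma l1norm_single: "l1norm (\<lambda>j. if j = 0 then a else 0) = \<bar>a\<bar>"
proof -
  have e: "(\<lambda>j. \<bar>if j = 0 then a else 0\<bar>) = (\<lambda>j. if j = 0 then \<bar>a\<bar> else 0)" by auto
  show ?thesis unfolding l1norm_def e using sums_single[of 0 "\<lambda>_. \<bar>a\<bar>"] sums_unique by metis
qed

lemma sup_formula:
  assumes "in_l1 x" "T \<ge> 0"
  shows "(SUP t\<in>{0..T}. l1norm (\<lambda>j. prodexp m n t x j - opexp EAop t x j))
     = T * \<bar>(\<Sum>i\<in>{1..n}. real (m i) * x (m i)) / real n - cc x\<bar>"
proof -
  let ?d = "\<bar>(\<Sum>i\<in>{1..n}. real (m i) * x (m i)) / real n - cc x\<bar>"
  have eq: "l1norm (\<lambda>j. prodexp m n t x j - opexp EAop t x j) = t * ?d" if "t \<ge> 0" for t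
  proof -
    have "(\<lambda>j. prodexp m n t x j - opexp EAop t x j) =
       (\<lambda>j. if j = 0 then t * ((\<Sum>i\<in>{1..n}. real (m i) * x (m i)) / real n - cc x) else 0)"
      by (auto simp: prodexp_formula[OF assms(1)] opexp_EAop[OF assms(1)] algebra_simps)
    then show ?thesis using that by (simp add: l1norm_single abs_mult)
  qed
  have "(SUP t\<in>{0..T}. l1norm (\<lambda>j. prodexp m n t x j - opexp EAop t x j)) = (SUP t\<in>{0..T}. t * ?d)"
    by (rule SUP_cong) (auto simp: eq)
  also have "\<dots> = T * ?d"
    using assms(2) by (intro cSup_eq_maximum) (auto intro: mult_right_mono)
  finally show ?thesis .
qed



lemma (in prob_space) integral_nat_rv:
  fixes X :: "'a \<Rightarrow> nat" and g :: "nat \<Rightarrow> real"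
  assumes rv: "X \<in> measurable M (count_space UNIV)"
    and summ: "summable (\<lambda>k. \<bar>g k\<bar> * measure M {\<omega> \<in> space M. X \<omega> = k})"
  shows "integrable M (\<lambda>\<omega>. g (X \<omega>))"
    and "(\<integral>\<omega>. g (X \<omega>) \<partial>M) = (\<Sum>k. g k * measure M {\<omega> \<in> space M. X \<omega> = k})"
proof -
  define A where "A k = {\<omega> \<in> space M. X \<omega> = k}" for k
  have A: "A k \<in> sets M" for k
    unfolding A_def using rv by measurable
  define f where "f k \<omega> = g k * indicator (A k) \<omega>" for k \<omega>
  have int: "integrable M (f k)" for k
    unfolding f_def using A by (intro integrable_mult_right integrable_real_indicator) (auto simp: less_top[symmetric])
  have pt: "f k \<omega> = (if k = X \<omega> then g (X \<omega>) else 0)" if "\<omega> \<in> space M" for k \<omega>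
    using that by (auto simp: f_def A_def indicator_def)
  have ptn: "norm (f k \<omega>) = (if k = X \<omega> then \<bar>g (X \<omega>)\<bar> else 0)" if "\<omega> \<in> space M" for k \<omega>
    using pt[OF that] by auto
  have s1: "AE \<omega> in M. summable (\<lambda>k. norm (f k \<omega>))"
  proof (rule AE_I2)
    fix \<omega> assume w: "\<omega> \<in> space M"
    have "(\<lambda>k. norm (f k \<omega>)) = (\<lambda>k. if k = X \<omega> then \<bar>g (X \<omega>)\<bar> else 0)"
      using ptn[OF w] by auto
    then show "summable (\<lambda>k. norm (f k \<omega>))"
      using sums_summable[OF sums_single[of "X \<omega>" "\<lambda>_. \<bar>g (X \<omega>)\<bar>"]] by simp
  qed
  have in1: "(\<integral>\<omega>. norm (f k \<omega>) \<partial>M) = \<bar>g k\<bar> * measure M (A k)" for k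
  proof -
    have "(\<integral>\<omega>. norm (f k \<omega>) \<partial>M) = (\<integral>\<omega>. \<bar>g k\<bar> * indicator (A k) \<omega> \<partial>M)"
      by (rule Bochner_Integration.integral_cong) (auto simp: f_def abs_mult)
    also have "\<dots> = \<bar>g k\<bar> * measure M (A k)" using A by (simp add: Int_absorb2 sets.sets_into_space)
    finally show ?thesis .
  qed
  have in2: "(\<integral>\<omega>. f k \<omega> \<partial>M) = g k * measure M (A k)" for k
    using A by (simp add: f_def Int_absorb2 sets.sets_into_space)
  have s2: "summable (\<lambda>k. (\<integral>\<omega>. norm (f k \<omega>) \<partial>M))"
    unfolding in1 A_def by (rule summ)
  have eq: "(\<Sum>k. f k \<omega>) = g (X \<omega>)" if "\<omega> \<in> space M" for \<omega>
    using sums_unique[OF sums_single[of "X \<omega>" "\<lambda>_. g (X \<omega>)"]] by (simp add: pt[OF that])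
  have "integrable M (\<lambda>\<omega>. \<Sum>k. f k \<omega>)" by (rule integrable_suminf[OF int s1 s2])
  then show "integrable M (\<lambda>\<omega>. g (X \<omega>))"
    using Bochner_Integration.integrable_cong[where M=M and N=M and f="\<lambda>\<omega>. \<Sum>k. f k \<omega>" and g="\<lambda>\<omega>. g (X \<omega>)"] eq by simp
  have "(\<integral>\<omega>. g (X \<omega>) \<partial>M) = (\<integral>\<omega>. (\<Sum>k. f k \<omega>) \<partial>M)"
    by (rule Bochner_Integration.integral_cong) (auto simp: eq)
  also have "\<dots> = (\<Sum>k. (\<integral>\<omega>. f k \<omega> \<partial>M))" by (rule integral_suminf[OF int s1 s2])
  finally show "(\<integral>\<omega>. g (X \<omega>) \<partial>M) = (\<Sum>k. g k * measure M {\<omega> \<in> space M. X \<omega> = k})"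
    by (simp add: in2 A_def)
qed

definition pp :: "nat \<Rightarrow> real" where "pp k = (if k = 0 then 0 else 1 / 2 ^ k)"

lemma pp_Suc: "pp (Suc k) = (1/2) * (1/2) ^ k"
  by (simp add: pp_def power_one_over)

lemma summable_pp: "summable pp"
  by (subst summable_Suc_iff[symmetric]) (simp add: pp_Suc)

lemma suminf_pp: "(\<Sum>k. pp k) = 1"
proof -
  have "(\<Sum>k. pp (Suc k)) = (\<Sum>k. pp k) - pp 0" by (rule suminf_split_head[OF summable_pp])
  moreover have "(\<Sum>k. pp (Suc k)) = 1"
  proof -
    have "(\<lambda>k. pp (Suc k)) sums ((1/2) * (1 / (1 - 1/2)))"
      unfolding pp_Suc by (intro sums_mult geometric_sums) simp
    then show ?thesis by (simp add: sums_iff)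
  qed
  ultimately show ?thesis by (simp add: pp_def)
qed

lemma summable_sq_pp: "summable (\<lambda>k. real k ^ 2 * pp k)"
proof (rule summable_ratio_test[where c="3/4" and N=5])
  fix n :: nat assume n: "n \<ge> 5"
  have "2 * (real n + 1)^2 \<le> 3 * real n ^ 2"
  proof -
    have ge: "real n \<ge> 5" using n by simp
    then have "real n * real n \<ge> 5 * real n" by (simp add: mult_right_mono)
    moreover have "2 * (real n + 1)^2 = 2 + 4 * real n + 2 * (real n * real n)"
      by (simp add: power2_eq_square algebra_simps)
    moreover have "3 * real n ^ 2 = 3 * (real n * real n)" by (simp add: power2_eq_square)
    ultimately show ?thesis using ge by linarith
  qed
  then show "norm (real (Suc n) ^ 2 * pp (Suc n)) \<le> 3/4 * norm (real n ^ 2 * pp n)"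
    using n by (simp add: pp_def power_one_over field_simps)
qed simp



lemma l1_bound: "in_l1 x \<Longrightarrow> \<bar>x k\<bar> \<le> l1norm x"
  unfolding in_l1_def l1norm_def
  using sum_le_suminf[of "\<lambda>k. \<bar>x k\<bar>" "{k}"] by simp

lemma summable_dom:
  fixes h :: "nat \<Rightarrow> real"
  assumes "\<And>k. \<bar>h k\<bar> \<le> K * (real k ^ 2 + 1)"
  shows "summable (\<lambda>k. \<bar>h k\<bar> * pp k)"
proof (rule summable_comparison_test[where g="\<lambda>k. K * (real k ^ 2 * pp k + pp k)"])
  show "summable (\<lambda>k. K * (real k ^ 2 * pp k + pp k))"
    by (intro summable_mult summable_add summable_sq_pp summable_pp)
  have "norm (\<bar>h n\<bar> * pp n) \<le> K * ((real n)\<^sup>2 * pp n + pp n)" for n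
  proof -
    have "\<bar>h n\<bar> * pp n \<le> K * (real n ^ 2 + 1) * pp n"
      by (rule mult_right_mono[OF assms]) (simp add: pp_def)
    moreover have "pp n \<ge> 0" by (simp add: pp_def)
    ultimately show ?thesis by (simp add: algebra_simps abs_mult)
  qed
  then show "\<exists>N. \<forall>n\<ge>N. norm (\<bar>h n\<bar> * pp n) \<le> K * ((real n)\<^sup>2 * pp n + pp n)" by blast
qed

lemma abs_pp: "summable (\<lambda>k. \<bar>h k\<bar> * pp k) \<Longrightarrow> summable (\<lambda>k. h k * pp k)"
proof -
  assume a: "summable (\<lambda>k. \<bar>h k\<bar> * pp k)"
  have "(\<lambda>k. \<bar>h k * pp k\<bar>) = (\<lambda>k. \<bar>h k\<bar> * pp k)" by (auto simp: abs_mult pp_def)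
  then show ?thesis using a summable_rabs_cancel by metis
qed

lemma sum_fpp:
  assumes "in_l1 x"
  shows "(\<Sum>k. real k * x k * pp k) = cc x" and "summable (\<lambda>k. real k * x k * pp k)"
proof -
  have b: "\<bar>real k * x k\<bar> \<le> l1norm x * (real k ^ 2 + 1)" for k
  proof -
    have "\<bar>real k * x k\<bar> = real k * \<bar>x k\<bar>" by (simp add: abs_mult)
    also have "\<dots> \<le> real k * l1norm x" by (rule mult_left_mono[OF l1_bound[OF assms]]) simp
    also have "\<dots> \<le> (real k ^ 2 + 1) * l1norm x"
    proof (rule mult_right_mono)
      have "real k \<le> real (k * k)" using le_square of_nat_le_iff by blast
      then show "real k \<le> real k ^ 2 + 1" by (simp add: power2_eq_square)
      show "0 \<le> l1norm x" using l1_bound[OF assms, of 0] by simp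
    qed
    finally show ?thesis by (simp add: mult.commute)
  qed
  show s: "summable (\<lambda>k. real k * x k * pp k)"
    using abs_pp[OF summable_dom[OF b]] .
  have "(\<Sum>k. real (Suc k) * x (Suc k) * pp (Suc k)) = (\<Sum>k. real k * x k * pp k) - 0"
    using suminf_split_head[OF s] by simp
  moreover have "(\<lambda>k. real (Suc k) * x (Suc k) * pp (Suc k)) = (\<lambda>k. real (Suc k) / 2 ^ (Suc k) * x (Suc k))"
    by (auto simp: pp_def)
  ultimately show "(\<Sum>k. real k * x k * pp k) = cc x" by (simp add: cc_def)
qed



theorem mainTheorem9:
  fixes M :: "'a measure" and \<xi> :: "nat \<Rightarrow> 'a \<Rightarrow> nat"
    and x :: "nat \<Rightarrow> real" and T \<epsilon> :: real
  assumes "prob_space M"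
    and "prob_space.indep_vars M (\<lambda>_. count_space UNIV) \<xi> {1..}"
    and "\<And>i k. i \<ge> 1 \<Longrightarrow> k \<ge> 1 \<Longrightarrow> measure M {\<omega> \<in> space M. \<xi> i \<omega> = k} = 1 / 2 ^ k"
    and "in_l1 x" and "T > 0" and "\<epsilon> > 0"
  shows "(\<forall>n. {\<omega> \<in> space M. (SUP t\<in>{0..T}.
              l1norm (\<lambda>j. prodexp (\<lambda>i. \<xi> i \<omega>) n t x j - opexp EAop t x j)) > \<epsilon>} \<in> sets M)
    \<and> (\<lambda>n. measure M {\<omega> \<in> space M. (SUP t\<in>{0..T}.
              l1norm (\<lambda>j. prodexp (\<lambda>i. \<xi> i \<omega>) n t x j - opexp EAop t x j)) > \<epsilon>})
      \<longlonglongrightarrow> 0"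
proof -
  interpret prob_space M by fact
  note ind = assms(2)
  have rv: "\<xi> i \<in> measurable M (count_space UNIV)" if "i \<ge> 1" for i
    using ind that unfolding indep_vars_def by auto
  have gm: "(\<lambda>\<omega>. g (\<xi> i \<omega>)) \<in> borel_measurable M" if "i \<ge> 1" for i and g :: "nat \<Rightarrow> real"
    by (rule measurable_compose[OF rv[OF that] borel_measurable_count_space])
  define Pr where "Pr i k = measure M {\<omega> \<in> space M. \<xi> i \<omega> = k}" for i k
  have Pk: "Pr i k = pp k" if i1: "i \<ge> 1" for i k
  proof (cases "k = 0")
    case False then show ?thesis using assms(3)[OF i1, of k] by (simp add: Pr_def pp_def)
  next
    case True
    have sucs: "(\<lambda>k. Pr i (Suc k)) = (\<lambda>k. pp (Suc k))"
      using assms(3)[OF i1] by (auto simp: Pr_def pp_def)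
    have sm: "summable (Pr i)"
      by (subst summable_Suc_iff[symmetric]) (simp only: sucs summable_Suc_iff summable_pp)
    have "(\<integral>\<omega>. (\<lambda>_. 1::real) (\<xi> i \<omega>) \<partial>M) = (\<Sum>k. (\<lambda>_. 1::real) k * measure M {\<omega> \<in> space M. \<xi> i \<omega> = k})"
      by (rule integral_nat_rv(2)[OF rv[OF i1]]) (use sm in \<open>simp add: Pr_def[abs_def]\<close>)
    then have "1 = (\<Sum>k. Pr i k)" by (simp add: Pr_def prob_space)
    also have "\<dots> = (\<Sum>k. Pr i (Suc k)) + Pr i 0" using suminf_split_head[OF sm] by simp
    also have "(\<Sum>k. Pr i (Suc k)) = 1"
      unfolding sucs using suminf_split_head[OF summable_pp] suminf_pp by (simp add: pp_def)
    finally have "Pr i 0 = 0" by simp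
    then show ?thesis using True by (simp add: pp_def)
  qed
  have EX: "integrable M (\<lambda>\<omega>. g (\<xi> i \<omega>)) \<and> (\<integral>\<omega>. g (\<xi> i \<omega>) \<partial>M) = (\<Sum>k. g k * pp k)"
    if i1: "i \<ge> 1" and sg: "summable (\<lambda>k. \<bar>g k\<bar> * pp k)" for i g
  proof -
    have eqp: "measure M {\<omega> \<in> space M. \<xi> i \<omega> = k} = pp k" for k
      using Pk[OF i1, of k] by (simp add: Pr_def)
    show ?thesis using integral_nat_rv[OF rv[OF i1], of g] sg by (simp add: eqp)
  qed
  define c where "c = cc x"
  define Bx where "Bx = l1norm x"
  have Bx0: "0 \<le> Bx" using l1_bound[OF assms(4), of 0] by (simp add: Bx_def)
  define h where "h k = real k * x k - c" for k
  define Y where "Y = (\<lambda>i \<omega>. h (\<xi> i \<omega>))"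
  have hb0: "\<bar>h k\<bar> \<le> real k * Bx + \<bar>c\<bar>" for k
  proof -
    have "\<bar>h k\<bar> \<le> \<bar>real k * x k\<bar> + \<bar>c\<bar>" unfolding h_def by (rule abs_triangle_ineq4)
    moreover have "\<bar>real k * x k\<bar> \<le> real k * Bx"
      unfolding Bx_def abs_mult using l1_bound[OF assms(4), of k] by (simp add: mult_left_mono)
    ultimately show ?thesis by linarith
  qed
  have kk: "real k \<le> real k ^ 2 + 1" for k :: nat
  proof -
    have "real k \<le> real (k * k)" using le_square of_nat_le_iff by blast
    then show ?thesis by (simp add: power2_eq_square)
  qed
  have hb: "\<bar>h k\<bar> \<le> (Bx + \<bar>c\<bar>) * (real k ^ 2 + 1)" for k
  proof -
    have "real k * Bx \<le> (real k ^ 2 + 1) * Bx" by (rule mult_right_mono[OF kk Bx0])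
    moreover have "\<bar>c\<bar> \<le> (real k ^ 2 + 1) * \<bar>c\<bar>" by (simp add: algebra_simps)
    moreover have "(Bx + \<bar>c\<bar>) * (real k ^ 2 + 1) = (real k ^ 2 + 1) * Bx + (real k ^ 2 + 1) * \<bar>c\<bar>"
      by (simp add: algebra_simps)
    ultimately show ?thesis using hb0[of k] by linarith
  qed
  have h2b: "\<bar>(h k)^2\<bar> \<le> (2 * Bx^2 + 2 * c^2) * (real k ^ 2 + 1)" for k
  proof -
    have "(h k)^2 \<le> (real k * Bx + \<bar>c\<bar>)^2"
      using hb0[of k] abs_le_square_iff[of "h k" "real k * Bx + \<bar>c\<bar>"] Bx0 by simp
    also have "\<dots> \<le> 2 * (real k * Bx)^2 + 2 * c^2"
    proof -
      have "0 \<le> (real k * Bx - \<bar>c\<bar>)^2" by simp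
      moreover have "(real k * Bx - \<bar>c\<bar>)^2 = (real k * Bx)^2 - 2 * (real k * Bx) * \<bar>c\<bar> + c^2"
        by (simp add: power2_diff)
      moreover have "(real k * Bx + \<bar>c\<bar>)^2 = (real k * Bx)^2 + 2 * (real k * Bx) * \<bar>c\<bar> + c^2"
        by (simp add: power2_sum)
      ultimately show ?thesis by linarith
    qed
    also have "\<dots> = (2 * Bx^2) * real k ^ 2 + 2 * c^2" by (simp add: power_mult_distrib)
    also have "\<dots> \<le> (2 * Bx^2 + 2 * c^2) * (real k ^ 2 + 1)"
      by (simp add: algebra_simps)
    finally show ?thesis by simp
  qed
  have sh: "summable (\<lambda>k. \<bar>h k\<bar> * pp k)" by (rule summable_dom[OF hb])
  have sh2: "summable (\<lambda>k. \<bar>(h k)^2\<bar> * pp k)" by (rule summable_dom[OF h2b])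
  define V where "V = (\<Sum>k. (h k)^2 * pp k)"
  have V0: "V \<ge> 0" unfolding V_def
    by (rule suminf_nonneg[OF abs_pp[OF sh2]]) (simp add: pp_def)
  have EY: "integrable M (Y i) \<and> (\<integral>\<omega>. Y i \<omega> \<partial>M) = 0" if "i \<ge> 1" for i
  proof -
    have "(\<Sum>k. h k * pp k) = (\<Sum>k. real k * x k * pp k - c * pp k)"
      by (simp add: h_def algebra_simps)
    also have "\<dots> = (\<Sum>k. real k * x k * pp k) - (\<Sum>k. c * pp k)"
      by (rule suminf_diff[OF sum_fpp(2)[OF assms(4)] summable_mult[OF summable_pp], symmetric])
    also have "\<dots> = 0" using sum_fpp(1)[OF assms(4)] suminf_mult[OF summable_pp, of c] suminf_pp
      by (simp add: c_def)
    finally show ?thesis using EX[OF that sh] by (simp add: Y_def)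
  qed
  have EY2: "integrable M (\<lambda>\<omega>. Y i \<omega> * Y i \<omega>) \<and> (\<integral>\<omega>. Y i \<omega> * Y i \<omega> \<partial>M) = V" if "i \<ge> 1" for i
    using EX[OF that sh2] by (simp add: Y_def V_def power2_eq_square)
  have indY: "indep_vars (\<lambda>_. borel) Y {i, j}" if "i \<ge> 1" "j \<ge> 1" for i j
  proof -
    have "indep_vars (\<lambda>_. count_space UNIV) \<xi> {i, j}"
      by (rule indep_vars_subset[OF ind]) (use that in auto)
    from indep_vars_compose2[OF this, of "\<lambda>_. h" "\<lambda>_. borel"]
    show ?thesis by (simp add: Y_def)
  qed
  have EYY: "integrable M (\<lambda>\<omega>. Y i \<omega> * Y j \<omega>) \<and> (\<integral>\<omega>. Y i \<omega> * Y j \<omega> \<partial>M) = (if i = j then V else 0)"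
    if "i \<ge> 1" "j \<ge> 1" for i j
  proof (cases "i = j")
    case True then show ?thesis using EY2[OF that(1)] by simp
  next
    case False
    have intk: "\<And>k. k \<in> {i, j} \<Longrightarrow> integrable M (Y k)" using EY that by auto
    have "(\<integral>\<omega>. (\<Prod>k\<in>{i, j}. Y k \<omega>) \<partial>M) = (\<Prod>k\<in>{i, j}. \<integral>\<omega>. Y k \<omega> \<partial>M)"
      by (rule indep_vars_lebesgue_integral[OF _ indY[OF that] intk]) simp
    moreover have "integrable M (\<lambda>\<omega>. \<Prod>k\<in>{i, j}. Y k \<omega>)"
      by (rule indep_vars_integrable[OF _ indY[OF that] intk]) simp
    ultimately show ?thesis using False EY that by simp
  qed
  define S where "S n \<omega> = (\<Sum>i\<in>{1..n}. real (\<xi> i \<omega>) * x (\<xi> i \<omega>))" for n \<omega>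
  define Z where "Z n \<omega> = (\<Sum>i\<in>{1..n}. Y i \<omega>)" for n \<omega>
  have SZ: "S n \<omega> - real n * c = Z n \<omega>" for n \<omega>
    by (simp add: S_def Z_def Y_def h_def sum_subtractf)
  have Z2: "(\<integral>\<omega>. (Z n \<omega>)^2 \<partial>M) = real n * V" and Z2i: "integrable M (\<lambda>\<omega>. (Z n \<omega>)^2)" for n
  proof -
    have sq: "(Z n \<omega>)^2 = (\<Sum>i\<in>{1..n}. \<Sum>j\<in>{1..n}. Y i \<omega> * Y j \<omega>)" for \<omega>
      by (simp add: Z_def power2_eq_square sum_product)
    have "(\<integral>\<omega>. (Z n \<omega>)^2 \<partial>M) = (\<integral>\<omega>. (\<Sum>i\<in>{1..n}. \<Sum>j\<in>{1..n}. Y i \<omega> * Y j \<omega>) \<partial>M)"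
      by (simp add: sq)
    also have "\<dots> = (\<Sum>i\<in>{1..n}. \<integral>\<omega>. (\<Sum>j\<in>{1..n}. Y i \<omega> * Y j \<omega>) \<partial>M)"
      by (rule Bochner_Integration.integral_sum) (use EYY in auto)
    also have "\<dots> = (\<Sum>i\<in>{1..n}. \<Sum>j\<in>{1..n}. \<integral>\<omega>. Y i \<omega> * Y j \<omega> \<partial>M)"
      by (rule sum.cong[OF refl], rule Bochner_Integration.integral_sum) (use EYY in auto)
    also have "\<dots> = (\<Sum>i\<in>{1..n}. \<Sum>j\<in>{1..n}. (if i = j then V else 0))"
      by (intro sum.cong refl) (use EYY in auto)
    also have "\<dots> = real n * V" by simp
    finally show "(\<integral>\<omega>. (Z n \<omega>)^2 \<partial>M) = real n * V" .
    show "integrable M (\<lambda>\<omega>. (Z n \<omega>)^2)"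
      unfolding sq by (intro Bochner_Integration.integrable_sum) (use EYY in auto)
  qed
  have Sm: "S n \<in> borel_measurable M" for n
    unfolding S_def by (intro borel_measurable_sum gm) auto
  have Zm: "(\<lambda>\<omega>. (Z n \<omega>)^2) \<in> borel_measurable M" for n
    using Z2i[of n] by (rule borel_measurable_integrable)
  have seteq: "{\<omega> \<in> space M. (SUP t\<in>{0..T}.
              l1norm (\<lambda>j. prodexp (\<lambda>i. \<xi> i \<omega>) n t x j - opexp EAop t x j)) > \<epsilon>}
     = {\<omega> \<in> space M. \<epsilon> < T * \<bar>S n \<omega> / real n - c\<bar>}" for n
    using sup_formula[OF assms(4), of T] assms(5) by (simp add: S_def c_def)
  have sets: "{\<omega> \<in> space M. \<epsilon> < T * \<bar>S n \<omega> / real n - c\<bar>} \<in> sets M" for n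
  proof -
    note Sm[measurable]
    show ?thesis by measurable
  qed
  define \<delta> where "\<delta> = \<epsilon> / T"
  have \<delta>0: "\<delta> > 0" using assms(5,6) by (simp add: \<delta>_def)
  have bound: "measure M {\<omega> \<in> space M. \<epsilon> < T * \<bar>S n \<omega> / real n - c\<bar>} \<le> (V / \<delta>^2) / real n"
    if n1: "n \<ge> 1" for n
  proof -
    have npos: "real n > 0" using n1 by simp
    have sub: "{\<omega> \<in> space M. \<epsilon> < T * \<bar>S n \<omega> / real n - c\<bar>}
        \<subseteq> {\<omega> \<in> space M. (real n * \<delta>)^2 \<le> (Z n \<omega>)^2}"
    proof safe
      fix \<omega> assume w: "\<omega> \<in> space M" and e: "\<epsilon> < T * \<bar>S n \<omega> / real n - c\<bar>"
      have "\<delta> < \<bar>S n \<omega> / real n - c\<bar>"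
        using e assms(5) by (simp add: \<delta>_def pos_divide_less_eq mult.commute)
      then have "real n * \<delta> < real n * \<bar>S n \<omega> / real n - c\<bar>"
        using npos by simp
      also have "real n * \<bar>S n \<omega> / real n - c\<bar> = \<bar>S n \<omega> - real n * c\<bar>"
      proof -
        have "real n * \<bar>S n \<omega> / real n - c\<bar> = \<bar>real n * (S n \<omega> / real n - c)\<bar>"
          using npos by (simp add: abs_mult)
        also have "real n * (S n \<omega> / real n - c) = S n \<omega> - real n * c"
          using npos by (simp add: algebra_simps)
        finally show ?thesis .
      qed
      finally have "\<bar>real n * \<delta>\<bar> \<le> \<bar>Z n \<omega>\<bar>" using SZ npos \<delta>0 by simp
      then show "(real n * \<delta>)^2 \<le> (Z n \<omega>)^2" by (simp add: abs_le_square_iff)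
    qed
    have "measure M {\<omega> \<in> space M. \<epsilon> < T * \<bar>S n \<omega> / real n - c\<bar>}
        \<le> measure M {\<omega> \<in> space M. (real n * \<delta>)^2 \<le> (Z n \<omega>)^2}"
      by (rule finite_measure_mono[OF sub]) (use Zm[of n] in measurable)
    also have "\<dots> \<le> (\<integral>\<omega>. (Z n \<omega>)^2 \<partial>M) / (real n * \<delta>)^2"
      by (rule integral_Markov_inequality_measure[OF Z2i sets.top]) (use npos \<delta>0 in auto)
    also have "\<dots> = (V / \<delta>^2) / real n"
      unfolding Z2 using npos \<delta>0 by (simp add: power2_eq_square field_simps)
    finally show ?thesis .
  qed
  show ?thesis
  proof
    show "\<forall>n. {\<omega> \<in> space M. (SUP t\<in>{0..T}.
              l1norm (\<lambda>j. prodexp (\<lambda>i. \<xi> i \<omega>) n t x j - opexp EAop t x j)) > \<epsilon>} \<in> sets M"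
      using sets seteq by simp
    show "(\<lambda>n. measure M {\<omega> \<in> space M. (SUP t\<in>{0..T}.
              l1norm (\<lambda>j. prodexp (\<lambda>i. \<xi> i \<omega>) n t x j - opexp EAop t x j)) > \<epsilon>}) \<longlonglongrightarrow> 0"
      unfolding seteq
    proof (rule tendsto_sandwich[of "\<lambda>_. 0" _ _ "\<lambda>n. (V / \<delta>^2) / real n"])
      show "\<forall>\<^sub>F n in sequentially. 0 \<le> measure M {\<omega> \<in> space M. \<epsilon> < T * \<bar>S n \<omega> / real n - c\<bar>}"
        by simp
      show "\<forall>\<^sub>F n in sequentially. measure M {\<omega> \<in> space M. \<epsilon> < T * \<bar>S n \<omega> / real n - c\<bar>} \<le> V / \<delta>^2 / real n"
        unfolding eventually_sequentially using bound by blast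
      show "(\<lambda>n. V / \<delta>^2 / real n) \<longlonglongrightarrow> 0" by (rule lim_const_over_n)
    qed simp
  qed
qed


end
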